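(* Let $S=\{0,1,\dots,p-1\}$ with $p\ge 2$, let $m\ge 2$, and let $f:S^m\to S$ be a local rule. The global map $\tau$ is injective if and only if there exists no pair of periodic local configurations for $f$.
   Context: A local configuration is a finite word over $S$. For a word $w=w_1w_2\cdots w_n$ with $n\ge m$, its successor under $f$ is the word $\hat f(w)=u_1\cdots u_{n-m+1}$ with $u_j=f(w_j,w_{j+1},\dots,w_{j+m-1})$. For $k\le n$, $\mathrm{left}_k(w)=w_1\cdots w_k$ and $\mathrm{right}_k(w)=w_{n-k+1}\cdots w_n$. The global map is $\tau:S^{\mathbb Z}\to S^{\mathbb Z}$, $\tau(c)(i)=f(c(i-L),\dots,c(i+R))$ for fixed integers $L,R\ge 0$ with $L+1+R=m$; the CA is (globally) injective if $\tau$ is injective. Two local configurations $\alpha,\beta$ of the same length $n$ are periodic if: $n\ge m$; $\alpha\ne\beta$; $\mathrm{left}_{m-1}(\alpha)=\mathrm{right}_{m-1}(\alpha)$; $\mathrm{left}_{m-1}(\beta)=\mathrm{right}_{m-1}(\beta)$; and $\hat f(\alpha)=\hat f(\beta)$. *)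

theory Defs
  imports Main
begin

(* States: S = {0..<p}, represented as naturals below p.
   A local rule f : S^m -> S is a function on words (lists) of length m. *)

definition words_over :: "nat \<Rightarrow> nat list set" where
  "words_over p = {w. \<forall>a\<in>set w. a < p}"

definition local_rule :: "nat \<Rightarrow> nat \<Rightarrow> (nat list \<Rightarrow> nat) \<Rightarrow> bool" where
  "local_rule p m f \<longleftrightarrow> (\<forall>w. length w = m \<and> w \<in> words_over p \<longrightarrow> f w < p)"

definition succ_word :: "(nat list \<Rightarrow> nat) \<Rightarrow> nat \<Rightarrow> nat list \<Rightarrow> nat list" where
  "succ_word f m w = map (\<lambda>j. f (take m (drop j w))) [0..<length w - m + 1]"

definition left_k :: "nat \<Rightarrow> 'a list \<Rightarrow> 'a list" where
  "left_k k w = take k w"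

definition right_k :: "nat \<Rightarrow> 'a list \<Rightarrow> 'a list" where
  "right_k k w = drop (length w - k) w"

definition configs :: "nat \<Rightarrow> (int \<Rightarrow> nat) set" where
  "configs p = {c. \<forall>i. c i < p}"

definition global_map :: "(nat list \<Rightarrow> nat) \<Rightarrow> nat \<Rightarrow> nat \<Rightarrow> (int \<Rightarrow> nat) \<Rightarrow> int \<Rightarrow> nat" where
  "global_map f L R c i = f (map (\<lambda>k. c (i - int L + int k)) [0..<L + 1 + R])"

definition periodic_pair :: "nat \<Rightarrow> nat \<Rightarrow> (nat list \<Rightarrow> nat) \<Rightarrow> nat list \<Rightarrow> nat list \<Rightarrow> bool" where
  "periodic_pair p m f \<alpha> \<beta> \<longleftrightarrow>
     \<alpha> \<in> words_over p \<and> \<beta> \<in> words_over p \<and>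
     length \<alpha> = length \<beta> \<and> length \<alpha> \<ge> m \<and> \<alpha> \<noteq> \<beta> \<and>
     left_k (m - 1) \<alpha> = right_k (m - 1) \<alpha> \<and>
     left_k (m - 1) \<beta> = right_k (m - 1) \<beta> \<and>
     succ_word f m \<alpha> = succ_word f m \<beta>"

end

theory Submission
  imports Defs
begin

definition word :: "(int \<Rightarrow> nat) \<Rightarrow> int \<Rightarrow> nat \<Rightarrow> nat list" where
  "word c a n = map (\<lambda>k. c (a + int k)) [0..<n]"

lemma word_len[simp]: "length (word c a n) = n"
  by (simp add: word_def)

lemma word_nth[simp]: "t < n \<Longrightarrow> word c a n ! t = c (a + int t)"
  by (simp add: word_def)

lemma word_drop: "drop j (word c a n) = word c (a + int j) (n - j)"
  by (rule nth_equalityI) (auto simp: add.assoc)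

lemma word_take: "take t (word c a n) = word c a (min t n)"
  by (rule nth_equalityI) auto

lemma word_win: "j + k \<le> n \<Longrightarrow> take k (drop j (word c a n)) = word c (a + int j) k"
  by (simp add: word_drop word_take)

lemma word_cong: "(\<And>t. t < n \<Longrightarrow> c (a + int t) = d (a + int t)) \<Longrightarrow> word c a n = word d a n"
  by (rule nth_equalityI) auto

lemma word_in: "(\<forall>i. c i < p) \<Longrightarrow> word c a n \<in> words_over p"
  by (auto simp: words_over_def word_def)

lemma gm_word: "L + 1 + R = m \<Longrightarrow> global_map f L R c i = f (word c (i - int L) m)"
  by (simp add: global_map_def word_def)

lemma succ_len: "length (succ_word f m w) = length w - m + 1"
  by (simp add: succ_word_def)

lemma succ_nth: "j < length w - m + 1 \<Longrightarrow> succ_word f m w ! j = f (take m (drop j w))"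
  by (simp add: succ_word_def del: upt_Suc)

lemma succ_eq:
  assumes "length \<alpha> = length \<beta>" "length \<alpha> \<ge> m"
    "\<And>j. j + m \<le> length \<alpha> \<Longrightarrow> f (take m (drop j \<alpha>)) = f (take m (drop j \<beta>))"
  shows "succ_word f m \<alpha> = succ_word f m \<beta>"
proof (rule nth_equalityI)
  show "length (succ_word f m \<alpha>) = length (succ_word f m \<beta>)" using assms by (simp add: succ_len)
next
  fix j assume "j < length (succ_word f m \<alpha>)"
  then have j: "j < length \<alpha> - m + 1" by (simp add: succ_len)
  then have "j + m \<le> length \<alpha>" using assms(2) by linarith
  then show "succ_word f m \<alpha> ! j = succ_word f m \<beta> ! j"
    using j assms by (simp add: succ_nth)
qed

lemma periodic_nth:
  assumes "left_k (m - 1) \<alpha> = right_k (m - 1) \<alpha>" "length \<alpha> \<ge> m" "m \<ge> 1"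
  shows "t < length \<alpha> \<Longrightarrow> \<alpha> ! t = \<alpha> ! (t mod (length \<alpha> - m + 1))"
proof (induction t rule: less_induct)
  case (less t)
  define P where "P = length \<alpha> - m + 1"
  have P: "P > 0" "length \<alpha> - (m - 1) = P" using assms unfolding P_def by auto
  show ?case
  proof (cases "t < P")
    case True then show ?thesis by (simp add: P_def)
  next
    case False
    have tp: "t - P < m - 1" using less.prems P assms False by linarith
    have "\<alpha> ! t = right_k (m - 1) \<alpha> ! (t - P)"
      unfolding right_k_def using P False less.prems by (simp add: nth_drop)
    also have "\<dots> = \<alpha> ! (t - P)" unfolding assms(1)[symmetric] left_k_def using tp by simp
    also have "\<dots> = \<alpha> ! ((t - P) mod P)" using less.IH[of "t - P"] P False less.prems
      by (simp add: P_def)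
    also have "(t - P) mod P = t mod P" using False by (simp add: mod_if)
    finally show ?thesis by (simp add: P_def)
  qed
qed

lemma dir1:
  assumes m: "m \<ge> 2" "L + 1 + R = m" and pp: "periodic_pair p m f \<alpha> \<beta>"
  shows "\<not> inj_on (global_map f L R) (configs p)"
proof
  assume inj: "inj_on (global_map f L R) (configs p)"
  define n where "n = length \<alpha>"
  define P where "P = n - m + 1"
  have nm: "n \<ge> m" and ln: "length \<beta> = n" using pp by (auto simp: periodic_pair_def n_def)
  have P: "P > 0" "P + (m - 1) = n" using nm m unfolding P_def by auto
  define C where "C = (\<lambda>\<gamma>::nat list. \<lambda>i::int. \<gamma> ! nat (i mod int P))"
  have key: "global_map f L R (C \<gamma>) i = succ_word f m \<gamma> ! nat ((i - int L) mod int P)"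
    if g: "length \<gamma> = n" "left_k (m - 1) \<gamma> = right_k (m - 1) \<gamma>" for \<gamma> i
  proof -
    define r where "r = nat ((i - int L) mod int P)"
    have r: "r < P" using P unfolding r_def by (simp add: nat_less_iff)
    have w: "word (C \<gamma>) (i - int L) m = take m (drop r \<gamma>)"
    proof (rule nth_equalityI)
      show "length (word (C \<gamma>) (i - int L) m) = length (take m (drop r \<gamma>))"
        using r P g by simp
    next
      fix k assume "k < length (word (C \<gamma>) (i - int L) m)"
      then have k: "k < m" by simp
      have rk: "r + k < n" using r k P by linarith
      have "take m (drop r \<gamma>) ! k = \<gamma> ! (r + k)" using k rk g by simp
      also have "\<dots> = \<gamma> ! ((r + k) mod P)"
        using periodic_nth[OF g(2)] g nm m rk by (simp add: P_def)
      also have "(r + k) mod P = nat ((i - int L + int k) mod int P)"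
      proof -
        have "int ((r + k) mod P) = (int r + int k) mod int P" by (simp add: zmod_int)
        also have "\<dots> = ((i - int L) mod int P + int k) mod int P"
          using P unfolding r_def by simp
        also have "\<dots> = (i - int L + int k) mod int P" by (simp add: mod_add_left_eq)
        finally show ?thesis by linarith
      qed
      finally show "word (C \<gamma>) (i - int L) m ! k = take m (drop r \<gamma>) ! k"
        using k by (simp add: C_def)
    qed
    have "r < length \<gamma> - m + 1" using r g P by (simp add: P_def)
    then show ?thesis using w gm_word[OF m(2)] by (simp add: succ_nth r_def)
  qed
  have ga: "global_map f L R (C \<alpha>) = global_map f L R (C \<beta>)"
  proof
    fix i show "global_map f L R (C \<alpha>) i = global_map f L R (C \<beta>) i"
      using key[of \<alpha> i] key[of \<beta> i] pp ln by (simp add: periodic_pair_def n_def)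
  qed
  have inc: "C \<gamma> \<in> configs p" if "\<gamma> \<in> words_over p" "length \<gamma> = n" for \<gamma>
  proof -
    { fix i
      have "nat (i mod int P) < P" using P by (simp add: nat_less_iff)
      then have "nat (i mod int P) < length \<gamma>" using P that by linarith
      then have "C \<gamma> i < p" using that by (auto simp: C_def words_over_def) }
    then show ?thesis by (simp add: configs_def)
  qed
  have "C \<alpha> = C \<beta>"
    using inj ga inc[of \<alpha>] inc[of \<beta>] pp ln by (auto simp: periodic_pair_def n_def inj_on_def)
  moreover obtain t where t: "t < n" "\<alpha> ! t \<noteq> \<beta> ! t"
    using pp ln nth_equalityI[of \<alpha> \<beta>] by (auto simp: periodic_pair_def n_def)
  moreover have "C \<gamma> (int t) = \<gamma> ! t"
    if "length \<gamma> = n" "left_k (m - 1) \<gamma> = right_k (m - 1) \<gamma>" for \<gamma>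
  proof -
    have "C \<gamma> (int t) = \<gamma> ! (t mod P)" by (simp add: C_def flip: of_nat_mod)
    also have "\<dots> = \<gamma> ! t" using periodic_nth[OF that(2)] that t nm m by (simp add: P_def)
    finally show ?thesis .
  qed
  ultimately show False using pp ln by (metis periodic_pair_def n_def)
qed


lemma pair_from_cycle:
  assumes cp: "\<forall>i. c i < p" and dp: "\<forall>i. d i < p" and m: "m \<ge> 2"
    and tau: "\<And>a. f (word c a m) = f (word d a m)"
    and k: "k1 < k2" "c k1 \<noteq> d k1"
    and g: "word c k1 (m - 1) = word c k2 (m - 1)" "word d k1 (m - 1) = word d k2 (m - 1)"
  shows "\<exists>\<alpha> \<beta>. periodic_pair p m f \<alpha> \<beta>"
proof -
  define \<delta> where "\<delta> = nat (k2 - k1)"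
  have \<delta>: "\<delta> > 0" "k1 + int \<delta> = k2" using k by (auto simp: \<delta>_def)
  define len where "len = \<delta> + (m - 1)"
  have lr: "left_k (m - 1) (word e k1 len) = right_k (m - 1) (word e k1 len)"
    if "word e k1 (m - 1) = word e k2 (m - 1)" for e
    using that \<delta> by (simp add: left_k_def right_k_def word_take word_drop len_def)
  have "periodic_pair p m f (word c k1 len) (word d k1 len)"
    unfolding periodic_pair_def
  proof (intro conjI)
    show "word c k1 len \<noteq> word d k1 len"
    proof
      assume "word c k1 len = word d k1 len"
      then have "word c k1 len ! 0 = word d k1 len ! 0" by simp
      then show False using k \<delta> m by (simp add: len_def)
    qed
    show "succ_word f m (word c k1 len) = succ_word f m (word d k1 len)"
      by (rule succ_eq) (use \<delta> m tau in \<open>auto simp: len_def word_win\<close>)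
  qed (use cp dp lr g \<delta> m in \<open>auto simp: word_in len_def\<close>)
  then show ?thesis by blast
qed

lemma dir2:
  assumes m: "m \<ge> 2" "L + 1 + R = m" and ni: "\<not> inj_on (global_map f L R) (configs p)"
  shows "\<exists>\<alpha> \<beta>. periodic_pair p m f \<alpha> \<beta>"
proof -
  obtain c d where c: "c \<in> configs p" and d: "d \<in> configs p" and cd: "c \<noteq> d"
    and eq: "global_map f L R c = global_map f L R d"
    using ni unfolding inj_on_def by blast
  have cp: "\<forall>i. c i < p" and dp: "\<forall>i. d i < p" using c d by (auto simp: configs_def)
  have tau: "f (word c a m) = f (word d a m)" for a
    using fun_cong[OF eq, of "a + int L"] gm_word[OF m(2)] by simp
  define D where "D = {i. c i \<noteq> d i}"
  have Dne: "D \<noteq> {}" using cd unfolding D_def by auto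
  show ?thesis
  proof (cases "finite D")
    case False
    define g where "g = (\<lambda>i. (word c i (m - 1), word d i (m - 1)))"
    define W where "W = {w::nat list. set w \<subseteq> {0..<p} \<and> length w = m - 1}"
    have fW: "finite W" unfolding W_def by (rule finite_lists_length_eq) simp
    have "g ` D \<subseteq> W \<times> W" using cp dp by (auto simp: g_def W_def word_def)
    then have "finite (g ` D)" using fW finite_subset by blast
    then have "\<not> inj_on g D" using False finite_imageD by blast
    then obtain k1 k2 where kk: "k1 \<in> D" "k2 \<in> D" "k1 \<noteq> k2" "g k1 = g k2"
      unfolding inj_on_def by blast
    show ?thesis
    proof (cases "k1 < k2")
      case True
      show ?thesis apply (rule pair_from_cycle[OF cp dp m(1) tau True])
        using kk by (simp_all add: D_def g_def)
    next
      case False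
      then have "k2 < k1" using kk by auto
      show ?thesis apply (rule pair_from_cycle[OF cp dp m(1) tau \<open>k2 < k1\<close>])
        using kk by (simp_all add: D_def g_def)
    qed
  next
    case True
    define a where "a = Min D"
    define b where "b = Max D"
    have aD: "a \<in> D" and bD: "b \<in> D" using True Dne by (auto simp: a_def b_def)
    have outD: "c i = d i" if "i < a \<or> i > b" for i
    proof -
      have "i \<notin> D"
      proof
        assume "i \<in> D"
        then have "a \<le> i" "i \<le> b" using True unfolding a_def b_def by simp_all
        then show False using that by linarith
      qed
      then show ?thesis by (simp add: D_def)
    qed
    have ab: "a \<le> b" using True aD unfolding b_def by simp
    define s where "s = a - int (m - 1)"
    define len1 where "len1 = nat (b - s) + m"
    define A where "A = word c s len1"
    define B where "B = word d s len1"
    define u where "u = word c s (m - 1)"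
    have u2: "u = word d s (m - 1)" unfolding u_def
      by (rule word_cong) (rule outD, use m in \<open>simp add: s_def; linarith\<close>)
    have len1: "len1 \<ge> m" "int len1 = b - s + int m" using ab m by (auto simp: len1_def s_def)
    have AB: "A \<noteq> B"
    proof
      assume "A = B"
      then have "A ! (m - 1) = B ! (m - 1)" by simp
      then show False using len1 aD m by (simp add: A_def B_def s_def D_def)
    qed
    define k0 where "k0 = len1 - (m - 1)"
    have dAB: "drop k0 A = drop k0 B"
      unfolding A_def B_def word_drop
      by (rule word_cong) (rule outD, use len1 m in \<open>simp add: k0_def\<close>)
    have "periodic_pair p m f (A @ u) (B @ u)"
      unfolding periodic_pair_def
    proof (intro conjI)
      show "A @ u \<in> words_over p" "B @ u \<in> words_over p"
        using word_in[OF cp] word_in[OF dp] u2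
        by (auto simp: A_def B_def u_def words_over_def)
      show "length (A @ u) = length (B @ u)" "m \<le> length (A @ u)"
        using len1 by (auto simp: A_def B_def)
      show "A @ u \<noteq> B @ u" using AB by simp
      show "left_k (m - 1) (A @ u) = right_k (m - 1) (A @ u)"
        using len1 by (simp add: left_k_def right_k_def A_def u_def word_take)
      show "left_k (m - 1) (B @ u) = right_k (m - 1) (B @ u)"
        using len1 by (simp add: left_k_def right_k_def B_def u2 word_take)
      show "succ_word f m (A @ u) = succ_word f m (B @ u)"
      proof (rule succ_eq)
        show "length (A @ u) = length (B @ u)" "m \<le> length (A @ u)"
          using len1 by (auto simp: A_def B_def)
        fix j assume j: "j + m \<le> length (A @ u)"
        show "f (take m (drop j (A @ u))) = f (take m (drop j (B @ u)))"
        proof (cases "j + m \<le> len1")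
          case True
          then show ?thesis using tau by (simp add: A_def B_def word_win)
        next
          case False
          then have jk: "k0 \<le> j" using len1 m by (simp add: k0_def)
          have "drop j (A @ u) = drop (j - k0) (drop k0 A @ u)"
            using jk len1 by (simp add: A_def k0_def)
          moreover have "drop j (B @ u) = drop (j - k0) (drop k0 B @ u)"
            using jk len1 by (simp add: B_def k0_def)
          ultimately show ?thesis using dAB by simp
        qed
      qed
    qed
    then show ?thesis by blast
  qed
qed

theorem theorem2:
  fixes p m L R :: nat and f :: "nat list \<Rightarrow> nat"
  assumes "p \<ge> 2" and "m \<ge> 2" and "L + 1 + R = m"
    and "local_rule p m f"
  shows "inj_on (global_map f L R) (configs p) \<longleftrightarrow>
         \<not> (\<exists>\<alpha> \<beta>. periodic_pair p m f \<alpha> \<beta>)"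
  using dir1[OF assms(2,3)] dir2[OF assms(2,3)] by blast

end
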